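(* Let $G$ be a signed cyclic graph and let $D_G$ be one of the virtual link diagrams associated with $G$ via the medial construction. Then $F[G](A,B,d)=\langle D_G\rangle(A,B,d)$.
   Context: A signed cyclic graph is a finite graph with a cyclic ordering of half-edges at each vertex (equivalently an orientable ribbon graph $\mathbf{G}_r$: vertex discs with edge ribbons attached in the given cyclic order) and a sign $\pm$ on each edge. Medial construction: embed $G$ cellularly in a closed oriented surface, place a real crossing at the midpoint of each edge $e$ and join crossings around faces; for positive $e$ the $B$-smoothing of the crossing separates the sides along $e$ (following the vertex boundaries) and the $A$-smoothing connects across $e$, for negative $e$ the roles are exchanged. Generically immersing in the plane with immersion artefacts as virtual crossings gives the virtual link diagrams associated with $G$. Bracket polynomial: for a virtual link diagram $D$, $\langle D\rangle(A,B,d)=\sum_{\sigma}A^{\alpha(\sigma)}B^{\beta(\sigma)}d^{|\sigma|-1}$, the sum over all states $\sigma$ (choices of $A$- or $B$-smoothing at every real crossing, virtual crossings left as is), $\alpha(\sigma),\beta(\sigma)$ the numbers of $A$- and $B$-smoothings, $|\sigma|$ the number of closed curves. The polynomial $F[G]$: edges may be "marked". For an edge $e$, $G-e$ deletes $e$ and $G(\bar e)$ keeps $e$ and marks it. Then $F[G]=B\,F[G-e]+A\,F[G(\bar e)]$ if $e$ is positive and $F[G]=A\,F[G-e]+B\,F[G(\bar e)]$ if $e$ is negative (applied to unmarked edges); and if $H$ is a spanning subgraph of $G$ (all vertices, a subset of edges with the induced cyclic order) all of whose edges are marked, $F[H]=d^{bc(H)-1}$, where $bc(H)$ is the number of boundary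 components of the ribbon graph $\mathbf{H}_r$ of $H$. *)

theory Defs
  imports Main
begin

text \<open>A signed cyclic graph is given by a vertex set V, a set H of half-edges (darts),
 the incidence map vert, a fixed-point-free involution alpha on H pairing the two
 half-edges of each edge (loops and multiple edges allowed), a permutation sigma of H
 whose cycles are exactly the cyclic orders of the half-edges at each vertex, and
 a sign on half-edges constant on edges (True = positive).\<close>

definition signed_cyclic_graph ::
  "'v set \<Rightarrow> 'd set \<Rightarrow> ('d \<Rightarrow> 'v) \<Rightarrow> ('d \<Rightarrow> 'd) \<Rightarrow> ('d \<Rightarrow> 'd) \<Rightarrow> ('d \<Rightarrow> bool) \<Rightarrow> bool" where
  "signed_cyclic_graph V H vert alpha sigma sg \<longleftrightarrow>
     finite V \<and> finite H \<and>
     (\<forall>h\<in>H. vert h \<in> V) \<and>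
     (\<forall>h\<in>H. alpha h \<in> H \<and> alpha h \<noteq> h \<and> alpha (alpha h) = h) \<and>
     bij_betw sigma H H \<and>
     (\<forall>h\<in>H. vert (sigma h) = vert h) \<and>
     (\<forall>h\<in>H. \<forall>h'\<in>H. vert h = vert h' \<longrightarrow> (\<exists>n. (sigma ^^ n) h = h')) \<and>
     (\<forall>h\<in>H. sg (alpha h) = sg h)"

text \<open>Cyclic order induced on a subset S of half-edges (spanning subgraph).\<close>
definition rot_on :: "'d set \<Rightarrow> ('d \<Rightarrow> 'd) \<Rightarrow> 'd \<Rightarrow> 'd" where
  "rot_on S sigma h = (sigma ^^ (LEAST k. 0 < k \<and> (sigma ^^ k) h \<in> S)) h"

definition orbit_count :: "'d set \<Rightarrow> ('d \<Rightarrow> 'd) \<Rightarrow> nat" where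
  "orbit_count S f = card (S // {(x, y). x \<in> S \<and> y \<in> S \<and> (\<exists>n. (f ^^ n) x = y)})"

text \<open>Number of boundary components of the ribbon graph of the spanning subgraph with
 half-edge set S: the face cycles (orbits of the induced rotation composed with alpha)
 plus one boundary circle for each vertex carrying no half-edge of S.\<close>
definition bc :: "'v set \<Rightarrow> ('d \<Rightarrow> 'v) \<Rightarrow> ('d \<Rightarrow> 'd) \<Rightarrow> ('d \<Rightarrow> 'd) \<Rightarrow> 'd set \<Rightarrow> nat" where
  "bc V vert alpha sigma S =
     orbit_count S (rot_on S sigma \<circ> alpha) + card {v \<in> V. \<forall>h\<in>S. vert h \<noteq> v}"

text \<open>The polynomial F[G], via its defining recursion. F_rel ... S M v means: the
 spanning subgraph with half-edge set S, whose edges with half-edges in M are marked,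
 has F-value v (any order of applying the recursion).\<close>
inductive F_rel :: "'v set \<Rightarrow> ('d \<Rightarrow> 'v) \<Rightarrow> ('d \<Rightarrow> 'd) \<Rightarrow> ('d \<Rightarrow> 'd) \<Rightarrow> ('d \<Rightarrow> bool)
    \<Rightarrow> 'a::comm_ring_1 \<Rightarrow> 'a \<Rightarrow> 'a \<Rightarrow> 'd set \<Rightarrow> 'd set \<Rightarrow> 'a \<Rightarrow> bool"
  for V vert alpha sigma sg A B d where
  all_marked: "M = S \<Longrightarrow> F_rel V vert alpha sigma sg A B d S M (d ^ (bc V vert alpha sigma S - 1))"
| pos: "\<lbrakk>h \<in> S; h \<notin> M; sg h;
         F_rel V vert alpha sigma sg A B d (S - {h, alpha h}) M v1;
         F_rel V vert alpha sigma sg A B d S (M \<union> {h, alpha h}) v2\<rbrakk>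
        \<Longrightarrow> F_rel V vert alpha sigma sg A B d S M (B * v1 + A * v2)"
| neg: "\<lbrakk>h \<in> S; h \<notin> M; \<not> sg h;
         F_rel V vert alpha sigma sg A B d (S - {h, alpha h}) M v1;
         F_rel V vert alpha sigma sg A B d S (M \<union> {h, alpha h}) v2\<rbrakk>
        \<Longrightarrow> F_rel V vert alpha sigma sg A B d S M (A * v1 + B * v2)"

text \<open>A virtual link diagram, up to the data relevant for state curves: a finite set X of
 real crossings, each with four ends (c,0),(c,1),(c,2),(c,3) in counterclockwise order,
 labelled so that the A-smoothing joins 0-1 and 2-3 and the B-smoothing joins 1-2 and 3-0;
 a fixed-point-free involution arc on ends (the arcs of the diagram between real crossings,
 passing through virtual crossings), and a number of crossingless closed components.\<close>

definition vends :: "'c set \<Rightarrow> ('c \<times> nat) set" where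
  "vends X = X \<times> {0..<4}"

definition virtual_link_diagram :: "'c set \<Rightarrow> ('c \<times> nat \<Rightarrow> 'c \<times> nat) \<Rightarrow> bool" where
  "virtual_link_diagram X arc \<longleftrightarrow> finite X \<and>
     (\<forall>x\<in>vends X. arc x \<in> vends X \<and> arc x \<noteq> x \<and> arc (arc x) = x)"

definition smA :: "'c \<times> nat \<Rightarrow> 'c \<times> nat" where
  "smA x = (fst x, [1,0,3,2] ! snd x)"

definition smB :: "'c \<times> nat \<Rightarrow> 'c \<times> nat" where
  "smB x = (fst x, [3,2,1,0] ! snd x)"

definition smooth :: "'c set \<Rightarrow> 'c \<times> nat \<Rightarrow> 'c \<times> nat" where
  "smooth s x = (if fst x \<in> s then smA x else smB x)"

definition state_rel :: "'c set \<Rightarrow> ('c \<times> nat \<Rightarrow> 'c \<times> nat) \<Rightarrow> 'c set \<Rightarrow> ('c \<times> nat) rel" where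
  "state_rel X arc s =
     ({(x, arc x) | x. x \<in> vends X} \<union> {(x, smooth s x) | x. x \<in> vends X})"

definition num_curves :: "'c set \<Rightarrow> ('c \<times> nat \<Rightarrow> 'c \<times> nat) \<Rightarrow> nat \<Rightarrow> 'c set \<Rightarrow> nat" where
  "num_curves X arc loops s =
     card (vends X // ((state_rel X arc s \<union> (state_rel X arc s)\<inverse>)\<^sup>*)) + loops"

definition bracket :: "'c set \<Rightarrow> ('c \<times> nat \<Rightarrow> 'c \<times> nat) \<Rightarrow> nat
    \<Rightarrow> 'a::comm_ring_1 \<Rightarrow> 'a \<Rightarrow> 'a \<Rightarrow> 'a" where
  "bracket X arc loops A B d =
     (\<Sum>s\<in>Pow X. A ^ card s * B ^ card (X - s) * d ^ (num_curves X arc loops s - 1))"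

text \<open>The ends of the medial crossing on the edge of half-edge h are (h,True), the strand
 towards the corner between h and sigma h, and (h,False), the strand towards the corner
 between the predecessor of h and h (for both half-edges h of the edge). Medial arcs run
 around the corners: (h,True) is joined to (sigma h,False). For positive edges the
 B-smoothing keeps the sides of the edge separated, following the vertex boundaries
 ((h,b) with (h,\<not>b)), and the A-smoothing connects across the edge ((h,b) with
 (alpha h,\<not>b)); for negative edges the roles are exchanged. An isolated vertex gives a
 crossingless circle.\<close>

definition medial_associated ::
  "'v set \<Rightarrow> 'd set \<Rightarrow> ('d \<Rightarrow> 'v) \<Rightarrow> ('d \<Rightarrow> 'd) \<Rightarrow> ('d \<Rightarrow> 'd) \<Rightarrow> ('d \<Rightarrow> bool)
   \<Rightarrow> 'c set \<Rightarrow> ('c \<times> nat \<Rightarrow> 'c \<times> nat) \<Rightarrow> nat \<Rightarrow> bool" where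
  "medial_associated V H vert alpha sigma sg X arc loops \<longleftrightarrow>
     virtual_link_diagram X arc \<and>
     loops = card {v \<in> V. \<forall>h\<in>H. vert h \<noteq> v} \<and>
     (\<exists>\<mu> :: 'd \<times> bool \<Rightarrow> 'c \<times> nat.
        bij_betw \<mu> (H \<times> UNIV) (vends X) \<and>
        (\<forall>h\<in>H. \<forall>b b'. fst (\<mu> (h, b)) = fst (\<mu> (alpha h, b'))) \<and>
        (\<forall>h\<in>H. \<forall>h'\<in>H. \<forall>b b'. fst (\<mu> (h, b)) = fst (\<mu> (h', b')) \<longrightarrow> h' = h \<or> h' = alpha h) \<and>
        (\<forall>h\<in>H. arc (\<mu> (h, True)) = \<mu> (sigma h, False)) \<and>
        (\<forall>h\<in>H. \<forall>b. smA (\<mu> (h, b)) = \<mu> (if sg h then (alpha h, \<not> b) else (h, \<not> b))) \<and>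
        (\<forall>h\<in>H. \<forall>b. smB (\<mu> (h, b)) = \<mu> (if sg h then (h, \<not> b) else (alpha h, \<not> b))))"

end

theory Submission
  imports Defs
begin


definition orel :: "'a set \<Rightarrow> ('a \<Rightarrow> 'a) \<Rightarrow> 'a rel" where
  "orel S f = {(x,y). x \<in> S \<and> y \<in> S \<and> (\<exists>n. (f^^n) x = y)}"

lemma orbit_count_orel: "orbit_count S f = card (S // orel S f)"
  by (simp add: orbit_count_def orel_def)

lemma funpow_in: "f ` S \<subseteq> S \<Longrightarrow> x \<in> S \<Longrightarrow> (f^^n) x \<in> S"
  by (induction n) auto

lemma funpow_cancel:
  assumes "inj_on f S" "f ` S \<subseteq> S" "x \<in> S" "y \<in> S" "(f^^i) x = (f^^i) y"
  shows "x = y"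
  using assms(3-5)
proof (induction i arbitrary: x y)
  case 0 then show ?case by simp
next
  case (Suc i)
  have "(f^^i) (f x) = (f^^i) (f y)" using Suc.prems(3) by (simp add: funpow_Suc_right del: funpow.simps)
  then have "f x = f y" using Suc.IH Suc.prems assms(2) by blast
  then show ?case using assms(1) Suc.prems by (meson inj_onD)
qed

lemma perm_period:
  assumes "finite S" "bij_betw f S S" "x \<in> S"
  shows "\<exists>p>0. (f^^p) x = x"
proof -
  have fS: "f ` S \<subseteq> S" using assms(2) bij_betw_imp_surj_on by blast
  have inj: "inj_on f S" using assms(2) bij_betw_imp_inj_on by blast
  have "range (\<lambda>n. (f^^n) x) \<subseteq> S" using funpow_in[OF fS assms(3)] by auto
  then have "finite (range (\<lambda>n. (f^^n) x))" using assms(1) finite_subset by blast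
  then have "\<not> inj (\<lambda>n. (f^^n) x)" using finite_imageD infinite_UNIV_nat by blast
  then obtain i j where ij: "i \<noteq> j" "(f^^i) x = (f^^j) x" unfolding inj_def by blast
  have "\<exists>i j. i < j \<and> (f^^i) x = (f^^j) x"
    using ij by (metis linorder_neq_iff)
  then obtain i j where ij2: "i < j" "(f^^i) x = (f^^j) x" by blast
  have "(f^^j) x = (f^^i) ((f^^(j-i)) x)"
    using ij2(1) by (metis funpow_add le_add_diff_inverse less_imp_le o_apply)
  then have "(f^^(j-i)) x = x"
    using funpow_cancel[OF inj fS funpow_in[OF fS assms(3)] assms(3)] ij2(2) by metis
  then show ?thesis using ij2(1) by (intro exI[of _ "j-i"]) auto
qed

lemma funpow_period_mult: "(f^^p) x = x \<Longrightarrow> (f^^(p*n)) x = x"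
proof (induction n)
  case 0 then show ?case by simp
next
  case (Suc n)
  have "(f^^(p*Suc n)) x = (f^^(p*n)) ((f^^p) x)"
    by (metis funpow_add mult_Suc_right add.commute o_apply)
  then show ?case using Suc by simp
qed

lemma orel_equiv:
  assumes "finite S" "bij_betw f S S"
  shows "equiv S (orel S f)"
proof (rule equivI)
  have fS: "f ` S \<subseteq> S" using assms(2) bij_betw_imp_surj_on by blast
  show "orel S f \<subseteq> S \<times> S" unfolding orel_def by auto
  show "refl_on S (orel S f)" unfolding refl_on_def orel_def
    by (auto intro: exI[of _ 0])
  show "sym (orel S f)" unfolding sym_def orel_def
  proof (clarsimp)
    fix x n assume x: "x \<in> S" and y: "(f^^n) x \<in> S"
    obtain p where p: "p > 0" "(f^^p) x = x" using perm_period[OF assms x] by blast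
    have "(f^^(p*n - n)) ((f^^n) x) = (f^^(p*n - n + n)) x" by (simp add: funpow_add)
    also have "p*n - n + n = p*n" using p(1) by (cases p) auto
    also have "(f^^(p*n)) x = x" using funpow_period_mult[OF p(2)] .
    finally show "\<exists>m. (f^^m) ((f^^n) x) = x" by blast
  qed
  show "trans (orel S f)" unfolding trans_def orel_def
  proof (clarsimp)
    fix x m n assume "x \<in> S"
    show "\<exists>k. (f^^k) x = (f^^n) ((f^^m) x)"
      by (rule exI[of _ "n+m"]) (simp add: funpow_add)
  qed
qed

lemma orbit_conj:
  assumes phi: "bij_betw \<phi> U U'" and fU: "f ` U \<subseteq> U" and com: "\<forall>x\<in>U. \<phi> (f x) = f' (\<phi> x)"
  shows "card (U // orel U f) = card (U' // orel U' f')"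
proof -
  have pow: "\<phi> ((f^^n) x) = (f'^^n) (\<phi> x)" if "x \<in> U" for x n
    using that proof (induction n)
    case 0 then show ?case by simp
  next
    case (Suc n) then show ?case using com funpow_in[OF fU] by simp
  qed
  have phiU: "\<phi> x \<in> U'" if "x \<in> U" for x using phi that bij_betw_imp_surj_on by blast
  have cls: "orel U' f' `` {\<phi> x} = \<phi> ` (orel U f `` {x})" if x: "x \<in> U" for x
  proof
    show "orel U' f' `` {\<phi> x} \<subseteq> \<phi> ` (orel U f `` {x})"
    proof
      fix y assume "y \<in> orel U' f' `` {\<phi> x}"
      then obtain n where "y = (f'^^n) (\<phi> x)" unfolding orel_def by auto
      then have y: "y = \<phi> ((f^^n) x)" using pow x by simp
      have "(x, (f^^n) x) \<in> orel U f" unfolding orel_def using x funpow_in[OF fU x] by blast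
      then show "y \<in> \<phi> ` (orel U f `` {x})" using y by blast
    qed
    show "\<phi> ` (orel U f `` {x}) \<subseteq> orel U' f' `` {\<phi> x}"
    proof
      fix y assume "y \<in> \<phi> ` (orel U f `` {x})"
      then obtain n where y: "y = \<phi> ((f^^n) x)" unfolding orel_def by auto
      have yU: "y \<in> U'" using y phiU funpow_in[OF fU x] by blast
      have "(f'^^n) (\<phi> x) = y" using y pow x by simp
      then have "(\<phi> x, y) \<in> orel U' f'" unfolding orel_def
        using yU phiU[OF x] by blast
      then show "y \<in> orel U' f' `` {\<phi> x}" by blast
    qed
  qed
  have U': "U' = \<phi> ` U" using phi bij_betw_imp_surj_on by metis
  have eq: "U' // orel U' f' = image \<phi> ` (U // orel U f)"
  proof -
    have "U' // orel U' f' = (\<Union>x\<in>U. {orel U' f' `` {\<phi> x}})"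
      unfolding quotient_def U' by simp
    also have "\<dots> = (\<Union>x\<in>U. {\<phi> ` (orel U f `` {x})})" using cls by simp
    also have "\<dots> = image \<phi> ` (U // orel U f)" unfolding quotient_def by blast
    finally show ?thesis .
  qed
  have sub: "U // orel U f \<subseteq> Pow U" unfolding quotient_def orel_def by auto
  have "inj_on (image \<phi>) (U // orel U f)"
    using inj_on_image_Pow[OF bij_betw_imp_inj_on[OF phi]] sub inj_on_subset by blast
  then show ?thesis unfolding eq by (simp add: card_image)
qed

lemma orbit_first_return:
  assumes fin: "finite U" and bij: "bij_betw f U U" and TU: "T \<subseteq> U"
    and g: "\<forall>x\<in>T. \<exists>k>0. (f^^k) x \<in> T \<and> g x = (f^^k) x \<and> (\<forall>j. 0 < j \<and> j < k \<longrightarrow> (f^^j) x \<notin> T)"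
  shows "card (U // orel U f) = card (T // orel T g) + card {Q \<in> U // orel U f. Q \<inter> T = {}}"
proof -
  define E where "E = orel U f"
  have eqv: "equiv U E" unfolding E_def using orel_equiv[OF fin bij] .
  have fU: "f ` U \<subseteq> U" using bij bij_betw_imp_surj_on by blast
  have gT: "g x \<in> T" if "x \<in> T" for x using g that by metis
  have gpow: "\<exists>n. (f^^n) t = (g^^m) t" if "t \<in> T" for t m
  proof (induction m)
    case 0 then show ?case by (auto intro: exI[of _ 0])
  next
    case (Suc m)
    then obtain n where n: "(f^^n) t = (g^^m) t" by blast
    have gm: "(g^^m) t \<in> T" using funpow_in[of g T] gT that by blast
    obtain k where "g ((g^^m) t) = (f^^k) ((g^^m) t)" using g gm by blast
    then have "(g^^Suc m) t = (f^^(k+n)) t" by (simp add: funpow_add n)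
    then show ?case by metis
  qed
  have bk: "\<forall>t\<in>T. (f^^n) t \<in> T \<longrightarrow> (\<exists>m. (g^^m) t = (f^^n) t)" for n
  proof (induction n rule: less_induct)
    case (less n)
    show ?case
    proof (intro ballI impI)
      fix t assume t: "t \<in> T" and fn: "(f^^n) t \<in> T"
      show "\<exists>m. (g^^m) t = (f^^n) t"
      proof (cases "n = 0")
        case True then show ?thesis by (auto intro: exI[of _ 0])
      next
        case False
        obtain k where k: "k > 0" "(f^^k) t \<in> T" "g t = (f^^k) t" "\<forall>j. 0 < j \<and> j < k \<longrightarrow> (f^^j) t \<notin> T"
          using g t by blast
        have kn: "k \<le> n" using k(4) fn False by (meson not_le not_gr_zero)
        have "(f^^n) t = (f^^(n-k)) (g t)" using kn k(3) by (metis funpow_add le_add_diff_inverse2 o_apply)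
        moreover have "n - k < n" using k(1) kn False by simp
        ultimately obtain m where "(g^^m) (g t) = (f^^n) t" using less.IH gT[OF t] fn by metis
        then have "(g^^Suc m) t = (f^^n) t" by (simp add: funpow_Suc_right del: funpow.simps)
        then show ?thesis by blast
      qed
    qed
  qed
  have key: "E `` {t} \<inter> T = orel T g `` {t}" if t: "t \<in> T" for t
  proof
    show "E `` {t} \<inter> T \<subseteq> orel T g `` {t}"
      using bk t unfolding E_def orel_def by fastforce
    show "orel T g `` {t} \<subseteq> E `` {t} \<inter> T"
    proof
      fix y assume "y \<in> orel T g `` {t}"
      then obtain m where y: "y \<in> T" "(g^^m) t = y" unfolding orel_def by auto
      then obtain n where "(f^^n) t = y" using gpow[OF t] by metis
      then show "y \<in> E `` {t} \<inter> T" unfolding E_def orel_def using y t TU by auto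
    qed
  qed
  have finQ: "finite (U // E)" using finite_quotient[OF fin] eqv unfolding equiv_def refl_on_def by blast
  have split: "U // E = {Q \<in> U // E. Q \<inter> T \<noteq> {}} \<union> {Q \<in> U // E. Q \<inter> T = {}}" by blast
  have c1: "card (U // E) = card {Q \<in> U // E. Q \<inter> T \<noteq> {}} + card {Q \<in> U // E. Q \<inter> T = {}}"
    by (subst split, rule card_Un_disjoint) (use finQ in auto)
  have bij2: "bij_betw (\<lambda>Q. Q \<inter> T) {Q \<in> U // E. Q \<inter> T \<noteq> {}} (T // orel T g)"
  proof (rule bij_betwI')
    fix Q1 Q2 assume Q1: "Q1 \<in> {Q \<in> U // E. Q \<inter> T \<noteq> {}}" and Q2: "Q2 \<in> {Q \<in> U // E. Q \<inter> T \<noteq> {}}"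
    show "(Q1 \<inter> T = Q2 \<inter> T) = (Q1 = Q2)"
    proof
      assume "Q1 \<inter> T = Q2 \<inter> T"
      then have "Q1 \<inter> Q2 \<noteq> {}" using Q1 by auto
      then show "Q1 = Q2" using quotient_disj[OF eqv] Q1 Q2 by blast
    qed simp
  next
    fix Q assume Q: "Q \<in> {Q \<in> U // E. Q \<inter> T \<noteq> {}}"
    then obtain t where t: "t \<in> Q" "t \<in> T" by auto
    obtain x where x: "x \<in> U" "Q = E `` {x}" using Q by (auto elim!: quotientE)
    then have "(x, t) \<in> E" using t by auto
    then have "Q = E `` {t}" using x equiv_class_eq[OF eqv] by metis
    then show "Q \<inter> T \<in> T // orel T g" using key[OF t(2)] t(2) unfolding quotient_def by auto
  next
    fix Y assume "Y \<in> T // orel T g"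
    then obtain t where t: "t \<in> T" "Y = orel T g `` {t}" unfolding quotient_def by auto
    have "E `` {t} \<in> U // E" using t TU unfolding quotient_def by auto
    moreover have "t \<in> E `` {t}" using equiv_class_self[OF eqv] t TU by auto
    ultimately show "\<exists>Q\<in>{Q \<in> U // E. Q \<inter> T \<noteq> {}}. Y = Q \<inter> T"
      using key[OF t(1)] t by (intro bexI[of _ "E `` {t}"]) auto
  qed
  show ?thesis using c1 bij_betw_same_card[OF bij2] unfolding E_def by simp
qed




lemma rot_on_char:
  assumes "finite S" "bij_betw f S S" "T \<subseteq> S" "t \<in> T"
  shows "\<exists>k>0. (f^^k) t \<in> T \<and> rot_on T f t = (f^^k) t \<and> (\<forall>j. 0 < j \<and> j < k \<longrightarrow> (f^^j) t \<notin> T)"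
proof -
  obtain p where p: "p > 0" "(f^^p) t = t" using perm_period[OF assms(1,2)] assms(3,4) by blast
  then have ex: "\<exists>k. 0 < k \<and> (f^^k) t \<in> T" using assms(4) by metis
  define k where "k = (LEAST k. 0 < k \<and> (f^^k) t \<in> T)"
  have k: "0 < k \<and> (f^^k) t \<in> T" unfolding k_def using LeastI_ex[OF ex] .
  have min: "\<forall>j. 0 < j \<and> j < k \<longrightarrow> (f^^j) t \<notin> T" unfolding k_def using not_less_Least by blast
  have "rot_on T f t = (f^^k) t" unfolding rot_on_def k_def ..
  then show ?thesis using k min by blast
qed

locale graphT =
  fixes V :: "'v set" and H :: "'d set" and vert :: "'d \<Rightarrow> 'v"
    and alpha sigma :: "'d \<Rightarrow> 'd" and sg :: "'d \<Rightarrow> bool" and T :: "'d set"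
  assumes G: "signed_cyclic_graph V H vert alpha sigma sg"
    and TH: "T \<subseteq> H" and Tcl: "\<forall>h\<in>T. alpha h \<in> T"
begin

lemma finH: "finite H" and vertV: "h \<in> H \<Longrightarrow> vert h \<in> V"
  and alpha_in: "h \<in> H \<Longrightarrow> alpha h \<in> H" and alpha_inv: "h \<in> H \<Longrightarrow> alpha (alpha h) = h"
  and sig_bij: "bij_betw sigma H H" and vert_sig: "h \<in> H \<Longrightarrow> vert (sigma h) = vert h"
  and sig_trans: "h \<in> H \<Longrightarrow> h' \<in> H \<Longrightarrow> vert h = vert h' \<Longrightarrow> \<exists>n. (sigma ^^ n) h = h'"
  using G unfolding signed_cyclic_graph_def by auto

lemma sig_in: "h \<in> H \<Longrightarrow> sigma h \<in> H"
  using sig_bij bij_betwE by blast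

definition tau :: "'d \<Rightarrow> 'd" where "tau h = (if h \<in> T then alpha h else h)"

definition P :: "'d \<times> bool \<Rightarrow> 'd \<times> bool" where
  "P x = (if snd x then (sigma (fst x), False) else (tau (fst x), True))"

lemma P_True[simp]: "P (h, True) = (sigma h, False)" and P_False[simp]: "P (h, False) = (tau h, True)"
  by (simp_all add: P_def)

lemma tau_in: "h \<in> H \<Longrightarrow> tau h \<in> H" using alpha_in by (simp add: tau_def)
lemma tau_tau: "h \<in> H \<Longrightarrow> tau (tau h) = h" using alpha_inv Tcl by (auto simp: tau_def)

lemma P_bij: "bij_betw P (H \<times> UNIV) (H \<times> UNIV)"
proof -
  have sub: "P ` (H \<times> UNIV) \<subseteq> H \<times> UNIV" using sig_in tau_in by (auto simp: P_def)
  have inj: "inj_on P (H \<times> UNIV)"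
  proof (rule inj_onI)
    fix x y assume x: "x \<in> H \<times> UNIV" and y: "y \<in> H \<times> UNIV" and e: "P x = P y"
    obtain h b where xh: "x = (h, b)" by (cases x)
    obtain h' b' where yh: "y = (h', b')" by (cases y)
    show "x = y"
    proof (cases b)
      case True
      then have "b'" using e xh yh by (cases b') auto
      then have "sigma h = sigma h'" using e xh yh True by simp
      then show ?thesis using sig_bij x y xh yh True \<open>b'\<close> by (auto dest: bij_betw_imp_inj_on inj_onD)
    next
      case False
      then have "\<not> b'" using e xh yh by (cases b') auto
      then have "tau h = tau h'" using e xh yh False by simp
      then have "h = h'" using tau_tau x y xh yh by (metis mem_Sigma_iff)
      then show ?thesis using xh yh False \<open>\<not> b'\<close> by simp
    qed
  qed
  have "P ` (H \<times> UNIV) = H \<times> UNIV" using endo_inj_surj[OF _ sub inj] finH by simp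
  then show ?thesis using inj by (simp add: bij_betw_def)
qed

lemma P_walk:
  assumes t: "t \<in> T" and min: "\<forall>j. 0 < j \<and> j < k \<longrightarrow> (sigma^^j) t \<notin> T"
  shows "j < k \<Longrightarrow> (P^^(2*j)) (t, True) = ((sigma^^j) t, True) \<and> (P^^(Suc (2*j))) (t, True) = ((sigma^^(Suc j)) t, False)"
proof (induction j)
  case 0 then show ?case by simp
next
  case (Suc j)
  then have ih: "(P^^(Suc (2*j))) (t, True) = ((sigma^^(Suc j)) t, False)" by simp
  have nt: "(sigma^^(Suc j)) t \<notin> T" using min Suc.prems by blast
  have e1: "(P^^(2*Suc j)) (t, True) = ((sigma^^(Suc j)) t, True)"
    using ih nt by (simp add: tau_def del: funpow.simps) (simp add: tau_def)
  then show ?case by simp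
qed


definition g :: "'d \<times> bool \<Rightarrow> 'd \<times> bool" where
  "g x = (alpha (rot_on T sigma (fst x)), True)"

lemma P_return:
  assumes t: "t \<in> T"
  shows "\<exists>K>0. (P^^K) (t, True) \<in> T \<times> {True} \<and> g (t, True) = (P^^K) (t, True)
           \<and> (\<forall>j. 0 < j \<and> j < K \<longrightarrow> (P^^j) (t, True) \<notin> T \<times> {True})"
proof -
  obtain k where k: "k > 0" "(sigma^^k) t \<in> T" "rot_on T sigma t = (sigma^^k) t"
    and min: "\<forall>j. 0 < j \<and> j < k \<longrightarrow> (sigma^^j) t \<notin> T"
    using rot_on_char[OF finH sig_bij TH t] by blast
  note W = P_walk[OF t min]
  obtain k' where k': "k = Suc k'" using k(1) not0_implies_Suc by blast
  have "(P^^(Suc (2*k'))) (t, True) = ((sigma^^k) t, False)" using W[of k'] k' by simp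
  then have e: "(P^^(2*k)) (t, True) = (alpha ((sigma^^k) t), True)"
    using k(2) k' by (simp add: tau_def del: funpow.simps) (simp add: tau_def)
  have inT: "(P^^(2*k)) (t, True) \<in> T \<times> {True}" using e Tcl k(2) by simp
  have geq: "g (t, True) = (P^^(2*k)) (t, True)" using e k(3) by (simp add: g_def)
  have nm: "(P^^i) (t, True) \<notin> T \<times> {True}" if i: "0 < i" "i < 2*k" for i
  proof -
    have "i div 2 < k" using i by simp
    have "i = 2*(i div 2) \<or> i = Suc (2*(i div 2))" by presburger
    then show ?thesis
    proof
      assume ie: "i = 2*(i div 2)"
      then have "0 < i div 2" using i by presburger
      then have "(sigma^^(i div 2)) t \<notin> T" using min \<open>i div 2 < k\<close> by blast
      then show ?thesis using W[OF \<open>i div 2 < k\<close>] ie by (metis SigmaD1 fst_conv)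
    next
      assume io: "i = Suc (2*(i div 2))"
      then show ?thesis using W[OF \<open>i div 2 < k\<close>] by (metis SigmaD2 singletonD snd_conv)
    qed
  qed
  show ?thesis using k(1) inT geq nm by (intro exI[of _ "2*k"]) auto
qed

lemma faces_count:
  "card ((T \<times> {True}) // orel (T \<times> {True}) g) = orbit_count T (rot_on T sigma \<circ> alpha)"
proof -
  have rotT: "rot_on T sigma t \<in> T" if "t \<in> T" for t
    using rot_on_char[OF finH sig_bij TH that] by auto
  have c1: "card (T // orel T (alpha \<circ> rot_on T sigma)) = card ((T \<times> {True}) // orel (T \<times> {True}) g)"
  proof (rule orbit_conj)
    show "bij_betw (\<lambda>t. (t, True)) T (T \<times> {True})" by (auto simp: bij_betw_def inj_on_def)
    show "(alpha \<circ> rot_on T sigma) ` T \<subseteq> T" using rotT Tcl by auto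
    show "\<forall>x\<in>T. ((alpha \<circ> rot_on T sigma) x, True) = g (x, True)" by (simp add: g_def)
  qed
  have c2: "card (T // orel T (rot_on T sigma \<circ> alpha)) = card (T // orel T (alpha \<circ> rot_on T sigma))"
  proof (rule orbit_conj)
    have "alpha ` T = T"
    proof
      show "alpha ` T \<subseteq> T" using Tcl by auto
      show "T \<subseteq> alpha ` T" using Tcl alpha_inv TH by (metis image_eqI subsetD subsetI)
    qed
    moreover have "inj_on alpha T" using alpha_inv TH by (metis inj_onI subsetD)
    ultimately show "bij_betw alpha T T" by (simp add: bij_betw_def)
    show "(rot_on T sigma \<circ> alpha) ` T \<subseteq> T" using rotT Tcl by auto
    show "\<forall>x\<in>T. alpha ((rot_on T sigma \<circ> alpha) x) = (alpha \<circ> rot_on T sigma) (alpha x)" by simp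
  qed
  show ?thesis using c1 c2 by (simp add: orbit_count_orel)
qed


abbreviation "E \<equiv> orel (H \<times> (UNIV::bool set)) P"

lemma finV: "finite V" using G unfolding signed_cyclic_graph_def by auto

lemma E_equiv: "equiv (H \<times> UNIV) E"
  using orel_equiv[OF _ P_bij] finH by simp

lemma P_in: "x \<in> H \<times> UNIV \<Longrightarrow> P x \<in> H \<times> UNIV"
  using sig_in tau_in by (cases x) (auto simp: P_def)

lemma cls_closed: "y \<in> E `` {x} \<Longrightarrow> P y \<in> E `` {x}"
proof -
  assume "y \<in> E `` {x}"
  then obtain n where y: "x \<in> H \<times> UNIV" "y \<in> H \<times> UNIV" "(P^^n) x = y" unfolding orel_def by auto
  then have e: "(P^^Suc n) x = P y" by simp
  have "P y \<in> H \<times> UNIV" using P_in y(2) .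
  then have "(x, P y) \<in> E" unfolding orel_def using y(1) e by blast
  then show "P y \<in> E `` {x}" by simp
qed

lemma inv_vert:
  assumes noT: "\<forall>h\<in>T. vert h \<noteq> v" and x: "x \<in> H \<times> UNIV" "vert (fst x) = v"
  shows "vert (fst ((P^^n) x)) = v"
proof (induction n)
  case 0 then show ?case using x by simp
next
  case (Suc n)
  have yin: "(P^^n) x \<in> H \<times> UNIV" using funpow_in[of P "H \<times> UNIV"] P_in x(1) by blast
  obtain h b where hb: "(P^^n) x = (h, b)" by (cases "(P^^n) x")
  have h: "h \<in> H" "vert h = v" using yin hb Suc by auto
  then have "h \<notin> T" using noT by blast
  show ?case using hb h \<open>h \<notin> T\<close> vert_sig by (cases b) (auto simp: tau_def)
qed

lemma class_sub:
  assumes noT: "\<forall>h\<in>T. vert h \<noteq> v" and x: "x \<in> H \<times> UNIV" "vert (fst x) = v"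
  shows "E `` {x} \<subseteq> {y. vert (fst y) = v}"
proof
  fix y assume "y \<in> E `` {x}"
  then obtain n where "(P^^n) x = y" unfolding orel_def by auto
  then show "y \<in> {y. vert (fst y) = v}" using inv_vert[OF assms, of n] by simp
qed

lemma disj_all:
  assumes x: "x \<in> H \<times> UNIV" and dj: "E `` {x} \<inter> T \<times> {True} = {}"
    and h: "h \<in> H" "vert h = vert (fst x)"
  shows "(h, True) \<in> E `` {x}"
proof -
  let ?Q = "E `` {x}"
  have noT: "fst y \<notin> T" if y: "y \<in> ?Q" for y
  proof
    assume yT: "fst y \<in> T"
    obtain h' b where hb: "y = (h', b)" by (cases y)
    show False
    proof (cases b)
      case True then show ?thesis using dj y yT hb by auto
    next
      case False
      then have "P y = (alpha h', True)" using hb yT by (simp add: tau_def)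
      then show ?thesis using cls_closed[OF y] dj Tcl yT hb by auto
    qed
  qed
  obtain g0 b where xg: "x = (g0, b)" by (cases x)
  have xQ: "x \<in> ?Q" using equiv_class_self[OF E_equiv x] .
  have gT: "(g0, True) \<in> ?Q"
  proof (cases b)
    case True then show ?thesis using xQ xg by simp
  next
    case False
    have "g0 \<notin> T" using noT[OF xQ] xg by simp
    then show ?thesis using cls_closed[OF xQ] xg False by (simp add: tau_def)
  qed
  have all: "((sigma^^n) g0, True) \<in> ?Q" for n
  proof (induction n)
    case 0 then show ?case using gT by simp
  next
    case (Suc n)
    have s1: "((sigma^^Suc n) g0, False) \<in> ?Q" using cls_closed[OF Suc] by simp
    then have "(sigma^^Suc n) g0 \<notin> T" using noT by fastforce
    then show ?case using cls_closed[OF s1] by (simp add: tau_def del: funpow.simps)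
  qed
  obtain n where "(sigma^^n) g0 = h" using sig_trans h x xg by (metis mem_Sigma_iff fst_conv)
  then show ?thesis using all by blast
qed

definition hv :: "'v \<Rightarrow> 'd" where "hv v = (SOME h. h \<in> H \<and> vert h = v)"

definition Vs where "Vs = {v \<in> V. (\<exists>h\<in>H. vert h = v) \<and> (\<forall>h\<in>T. vert h \<noteq> v)}"

lemma hv: "v \<in> Vs \<Longrightarrow> hv v \<in> H \<and> vert (hv v) = v"
  unfolding hv_def Vs_def by (rule someI_ex) blast

lemma disjoint_count:
  "card {Q \<in> (H \<times> UNIV) // E. Q \<inter> T \<times> {True} = {}} = card Vs"
proof -
  have "bij_betw (\<lambda>v. E `` {(hv v, True)}) Vs {Q \<in> (H \<times> UNIV) // E. Q \<inter> T \<times> {True} = {}}"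
  proof (rule bij_betwI')
    fix v w assume v: "v \<in> Vs" and w: "w \<in> Vs"
    show "(E `` {(hv v, True)} = E `` {(hv w, True)}) = (v = w)"
    proof
      assume e: "E `` {(hv v, True)} = E `` {(hv w, True)}"
      have "(hv w, True) \<in> E `` {(hv w, True)}" using equiv_class_self[OF E_equiv] hv[OF w] by simp
      then have "(hv w, True) \<in> E `` {(hv v, True)}" using e by simp
      moreover have "\<forall>h\<in>T. vert h \<noteq> v" using v unfolding Vs_def by blast
      ultimately have "vert (hv w) = v" using class_sub[of v "(hv v, True)"] hv[OF v] by auto
      then show "v = w" using hv[OF w] by simp
    qed simp
  next
    fix v assume v: "v \<in> Vs"
    have noT: "\<forall>h\<in>T. vert h \<noteq> v" using v unfolding Vs_def by blast
    have "E `` {(hv v, True)} \<in> (H \<times> UNIV) // E" using hv[OF v] unfolding quotient_def by auto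
    moreover have "E `` {(hv v, True)} \<inter> T \<times> {True} = {}"
      using class_sub[OF noT, of "(hv v, True)"] hv[OF v] noT by auto
    ultimately show "E `` {(hv v, True)} \<in> {Q \<in> (H \<times> UNIV) // E. Q \<inter> T \<times> {True} = {}}" by blast
  next
    fix Q assume "Q \<in> {Q \<in> (H \<times> UNIV) // E. Q \<inter> T \<times> {True} = {}}"
    then obtain x where x: "x \<in> H \<times> UNIV" "Q = E `` {x}" and dj: "Q \<inter> T \<times> {True} = {}"
      by (auto elim!: quotientE)
    define v where "v = vert (fst x)"
    have vV: "v \<in> V" using x vertV unfolding v_def by auto
    have noT: "\<forall>h\<in>T. vert h \<noteq> v"
    proof (intro ballI notI)
      fix h assume "h \<in> T" "vert h = v"
      then have "(h, True) \<in> Q" using disj_all[OF x(1)] dj x(2) TH unfolding v_def by blast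
      then show False using dj \<open>h \<in> T\<close> by auto
    qed
    have vVs: "v \<in> Vs" unfolding Vs_def using vV noT x(1) unfolding v_def by auto
    have "(hv v, True) \<in> Q" using disj_all[OF x(1)] dj x(2) hv[OF vVs] unfolding v_def by simp
    then have "Q = E `` {(hv v, True)}" using x equiv_class_eq[OF E_equiv] by blast
    then show "\<exists>v\<in>Vs. Q = E `` {(hv v, True)}" using vVs by blast
  qed
  then show ?thesis by (simp add: bij_betw_same_card)
qed

lemma curves_count:
  "card ((H \<times> UNIV) // E) + card {v \<in> V. \<forall>h\<in>H. vert h \<noteq> v} = bc V vert alpha sigma T"
proof -
  have fr: "card ((H \<times> UNIV) // E) = card ((T \<times> {True}) // orel (T \<times> {True}) g)
              + card {Q \<in> (H \<times> UNIV) // E. Q \<inter> T \<times> {True} = {}}"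
  proof (rule orbit_first_return[OF _ P_bij])
    show "finite (H \<times> (UNIV::bool set))" using finH by simp
    show "T \<times> {True} \<subseteq> H \<times> UNIV" using TH by auto
    show "\<forall>x\<in>T \<times> {True}. \<exists>k>0. (P^^k) x \<in> T \<times> {True} \<and> g x = (P^^k) x \<and> (\<forall>j. 0 < j \<and> j < k \<longrightarrow> (P^^j) x \<notin> T \<times> {True})"
      using P_return by blast
  qed
  have vs: "{v \<in> V. \<forall>h\<in>T. vert h \<noteq> v} = Vs \<union> {v \<in> V. \<forall>h\<in>H. vert h \<noteq> v}"
    unfolding Vs_def using TH by blast
  have "card {v \<in> V. \<forall>h\<in>T. vert h \<noteq> v} = card Vs + card {v \<in> V. \<forall>h\<in>H. vert h \<noteq> v}"
    unfolding vs by (rule card_Un_disjoint) (use finV in \<open>auto simp: Vs_def\<close>)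
  then show ?thesis unfolding bc_def using fr faces_count disjoint_count by simp
qed

end



locale medial =
  fixes V :: "'v set" and H :: "'d set" and vert :: "'d \<Rightarrow> 'v"
    and alpha sigma :: "'d \<Rightarrow> 'd" and sg :: "'d \<Rightarrow> bool"
    and X :: "'c set" and arc :: "'c \<times> nat \<Rightarrow> 'c \<times> nat" and loops :: nat
    and mu :: "'d \<times> bool \<Rightarrow> 'c \<times> nat"
  assumes G: "signed_cyclic_graph V H vert alpha sigma sg"
    and vld: "virtual_link_diagram X arc"
    and loops: "loops = card {v \<in> V. \<forall>h\<in>H. vert h \<noteq> v}"
    and mu_bij: "bij_betw mu (H \<times> UNIV) (vends X)"
    and mu_cr: "\<forall>h\<in>H. \<forall>b b'. fst (mu (h, b)) = fst (mu (alpha h, b'))"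
    and mu_cr2: "\<forall>h\<in>H. \<forall>h'\<in>H. \<forall>b b'. fst (mu (h, b)) = fst (mu (h', b')) \<longrightarrow> h' = h \<or> h' = alpha h"
    and mu_arc: "\<forall>h\<in>H. arc (mu (h, True)) = mu (sigma h, False)"
    and mu_A: "\<forall>h\<in>H. \<forall>b. smA (mu (h, b)) = mu (if sg h then (alpha h, \<not> b) else (h, \<not> b))"
    and mu_B: "\<forall>h\<in>H. \<forall>b. smB (mu (h, b)) = mu (if sg h then (h, \<not> b) else (alpha h, \<not> b))"
begin

lemma alpha_in: "h \<in> H \<Longrightarrow> alpha h \<in> H" and alpha_inv: "h \<in> H \<Longrightarrow> alpha (alpha h) = h"
  and sg_alpha: "h \<in> H \<Longrightarrow> sg (alpha h) = sg h" and sig_bij: "bij_betw sigma H H"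
  and finH: "finite H"
  using G unfolding signed_cyclic_graph_def by auto

definition cr :: "'d \<Rightarrow> 'c" where "cr h = fst (mu (h, True))"

lemma crb: "h \<in> H \<Longrightarrow> fst (mu (h, b)) = cr h"
  using mu_cr unfolding cr_def by metis

lemma cr_alpha: "h \<in> H \<Longrightarrow> cr (alpha h) = cr h"
  using mu_cr unfolding cr_def by metis

lemma cr_eq: "h \<in> H \<Longrightarrow> h' \<in> H \<Longrightarrow> cr h = cr h' \<Longrightarrow> h' = h \<or> h' = alpha h"
  using mu_cr2 unfolding cr_def by metis

lemma mu_in: "h \<in> H \<Longrightarrow> mu (h, b) \<in> vends X"
  using mu_bij bij_betwE by fastforce

lemma cr_in: "h \<in> H \<Longrightarrow> cr h \<in> X"
  using mu_in[of h True] unfolding cr_def vends_def by auto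

definition Tset :: "'c set \<Rightarrow> 'd set" where "Tset s = {h \<in> H. (cr h \<in> s) = sg h}"

lemma Tset_graphT: "graphT V H vert alpha sigma sg (Tset s)"
  unfolding graphT_def Tset_def using G alpha_in cr_alpha sg_alpha by auto

lemma smooth_mu:
  assumes h: "h \<in> H"
  shows "smooth s (mu (h, b)) = mu (if h \<in> Tset s then (alpha h, \<not> b) else (h, \<not> b))"
  using h mu_A mu_B crb[OF h] unfolding smooth_def Tset_def by auto

lemma smooth_invol:
  assumes z: "z \<in> vends X" shows "smooth s (smooth s z) = z"
proof -
  obtain c i where zi: "z = (c, i)" "i < 4" using z unfolding vends_def by auto
  then have "i = 0 \<or> i = 1 \<or> i = 2 \<or> i = 3" by auto
  then show ?thesis using zi by (auto simp: smooth_def smA_def smB_def)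
qed

lemma arc_invol: "z \<in> vends X \<Longrightarrow> arc (arc z) = z" and arc_in: "z \<in> vends X \<Longrightarrow> arc z \<in> vends X"
  using vld unfolding virtual_link_diagram_def by auto

lemma curves:
  "card (vends X // ((state_rel X arc s \<union> (state_rel X arc s)\<inverse>)\<^sup>*)) + loops
     = bc V vert alpha sigma (Tset s)"
proof -
  interpret gT: graphT V H vert alpha sigma sg "Tset s" by (rule Tset_graphT)
  define SR where "SR = state_rel X arc s"
  define Rc where "Rc = (SR \<union> SR\<inverse>)\<^sup>*"
  define EE where "EE = orel (H \<times> (UNIV::bool set)) gT.P"
  have eqv: "equiv (H \<times> UNIV) EE" unfolding EE_def by (rule gT.E_equiv)
  have muP: "(mu y, mu (gT.P y)) \<in> SR" if y: "y \<in> H \<times> UNIV" for y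
  proof -
    obtain h b where hb: "y = (h, b)" by (cases y)
    have h: "h \<in> H" using y hb by auto
    show ?thesis
    proof (cases b)
      case True
      have e: "arc (mu (h, True)) = mu (gT.P (h, True))" using mu_arc h by simp
      have y': "y = (h, True)" using hb True by simp
      have "(mu (h, True), arc (mu (h, True))) \<in> SR"
        unfolding SR_def state_rel_def using mu_in[OF h] by blast
      then show ?thesis using e y' by simp
    next
      case False
      have e: "smooth s (mu (h, False)) = mu (gT.P (h, False))"
        using smooth_mu[OF h] by (simp add: gT.tau_def)
      have y': "y = (h, False)" using hb False by simp
      have "(mu (h, False), smooth s (mu (h, False))) \<in> SR"
        unfolding SR_def state_rel_def using mu_in[OF h] by blast
      then show ?thesis using e y' by simp
    qed
  qed
  have stp: "\<exists>q'\<in>H \<times> UNIV. z = mu q' \<and> (q' = gT.P q \<or> gT.P q' = q)"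
    if q: "q \<in> H \<times> UNIV" and z: "z = arc (mu q) \<or> z = smooth s (mu q)" for q z
  proof -
    obtain h b where hb: "q = (h, b)" by (cases q)
    have h: "h \<in> H" using q hb by auto
    have taui: "gT.tau h \<in> H" "gT.tau (gT.tau h) = h" using gT.tau_in gT.tau_tau h by auto
    show ?thesis
    proof (cases b)
      case True
      show ?thesis using z
      proof
        assume "z = arc (mu q)"
        then have "z = mu (gT.P q)" using hb True mu_arc h by simp
        then show ?thesis using gT.P_in q by blast
      next
        assume "z = smooth s (mu q)"
        then have "z = mu (gT.tau h, False)" using hb True smooth_mu[OF h] by (simp add: gT.tau_def)
        moreover have "gT.P (gT.tau h, False) = q" using taui hb True by simp
        ultimately show ?thesis using taui by blast
      qed
    next
      case False
      show ?thesis using z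
      proof
        assume za: "z = arc (mu q)"
        obtain g where g: "g \<in> H" "sigma g = h" using sig_bij h by (metis bij_betw_def imageE)
        have "arc (mu (g, True)) = mu (h, False)" using mu_arc g by auto
        then have "z = mu (g, True)" using za hb False arc_invol[OF mu_in[OF g(1)]] by metis
        moreover have "gT.P (g, True) = q" using g hb False by simp
        ultimately show ?thesis using g by blast
      next
        assume "z = smooth s (mu q)"
        then have "z = mu (gT.P q)" using hb False smooth_mu[OF h] by (simp add: gT.tau_def)
        then show ?thesis using gT.P_in q by blast
      qed
    qed
  qed
  have sr_cases: "z = arc (mu q) \<or> z = smooth s (mu q)"
    if q: "q \<in> H \<times> UNIV" and e: "(mu q, z) \<in> SR \<union> SR\<inverse>" for q z
  proof -
    have mq: "mu q \<in> vends X" using q mu_in by auto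
    from e consider "(mu q, z) \<in> SR" | "(z, mu q) \<in> SR" by blast
    then show ?thesis
    proof cases
      case 1 then show ?thesis unfolding SR_def state_rel_def by blast
    next
      case 2
      then obtain x where x: "x \<in> vends X" "(z = x \<and> mu q = arc x) \<or> (z = x \<and> mu q = smooth s x)"
        unfolding SR_def state_rel_def by blast
      then show ?thesis using arc_invol smooth_invol by metis
    qed
  qed
  have cls: "Rc `` {mu p} = mu ` (EE `` {p})" if p: "p \<in> H \<times> UNIV" for p
  proof
    show "Rc `` {mu p} \<subseteq> mu ` (EE `` {p})"
    proof
      fix z assume "z \<in> Rc `` {mu p}"
      then have "(mu p, z) \<in> Rc" by simp
      then show "z \<in> mu ` (EE `` {p})" unfolding Rc_def
      proof (induction rule: rtrancl_induct)
        case base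
        then show ?case using equiv_class_self[OF eqv p] by blast
      next
        case (step y z)
        then obtain q where qE: "q \<in> EE `` {p}" and yq: "y = mu q" by blast
        have q: "q \<in> H \<times> UNIV" using qE unfolding EE_def orel_def by auto
        obtain q' where q': "q' \<in> H \<times> UNIV" "z = mu q'" "q' = gT.P q \<or> gT.P q' = q"
          using step(2) yq sr_cases[OF q] stp[OF q] by blast
        have "q' \<in> EE `` {p}"
          using q'(3)
        proof
          assume "q' = gT.P q" then show ?thesis using gT.cls_closed qE unfolding EE_def by blast
        next
          assume "gT.P q' = q"
          then have "(q', q) \<in> EE" unfolding EE_def orel_def using q q'(1) by (auto intro: exI[of _ 1])
          then have "(q, q') \<in> EE" using eqv by (meson equiv_def symD)
          moreover have "(p, q) \<in> EE" using qE by simp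
          ultimately show ?thesis using eqv by (meson equiv_def transD Image_singleton_iff)
        qed
        then show ?case using q'(2) by blast
      qed
    qed
    show "mu ` (EE `` {p}) \<subseteq> Rc `` {mu p}"
    proof
      fix z assume "z \<in> mu ` (EE `` {p})"
      then obtain q where q: "q \<in> EE `` {p}" "z = mu q" by blast
      then have "(p, q) \<in> EE" by simp
      then obtain n where "(gT.P^^n) p = q" unfolding EE_def orel_def by blast
      then have zn: "z = mu ((gT.P^^n) p)" using q(2) by simp
      have "(mu p, mu ((gT.P^^n) p)) \<in> Rc" for n
      proof (induction n)
        case 0 then show ?case unfolding Rc_def by simp
      next
        case (Suc n)
        have "(gT.P^^n) p \<in> H \<times> UNIV" using funpow_in[of gT.P "H \<times> UNIV"] gT.P_in p by blast
        then have "(mu ((gT.P^^n) p), mu ((gT.P^^Suc n) p)) \<in> SR" using muP by simp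
        then show ?case using Suc unfolding Rc_def
          by (meson UnI1 rtrancl.rtrancl_into_rtrancl)
      qed
      then show "z \<in> Rc `` {mu p}" using zn by simp
    qed
  qed
  have VX: "vends X = mu ` (H \<times> UNIV)" using mu_bij bij_betw_imp_surj_on by metis
  have eq: "vends X // Rc = image mu ` ((H \<times> UNIV) // EE)"
  proof -
    have "vends X // Rc = (\<Union>x\<in>H \<times> UNIV. {Rc `` {mu x}})"
      unfolding quotient_def VX by simp
    also have "\<dots> = (\<Union>x\<in>H \<times> UNIV. {mu ` (EE `` {x})})" using cls by simp
    also have "\<dots> = image mu ` ((H \<times> UNIV) // EE)" unfolding quotient_def by blast
    finally show ?thesis .
  qed
  have sub: "(H \<times> UNIV) // EE \<subseteq> Pow (H \<times> UNIV)" unfolding quotient_def EE_def orel_def by auto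
  have "inj_on (image mu) ((H \<times> UNIV) // EE)"
    using inj_on_image_Pow[OF bij_betw_imp_inj_on[OF mu_bij]] sub inj_on_subset by blast
  then have "card (vends X // Rc) = card ((H \<times> UNIV) // EE)" unfolding eq by (simp add: card_image)
  then show ?thesis using gT.curves_count loops unfolding Rc_def SR_def EE_def by simp
qed

end



context medial begin

definition rep :: "'c \<Rightarrow> 'd" where "rep c = (SOME h. h \<in> H \<and> cr h = c)"

definition wt :: "'a::comm_ring_1 \<Rightarrow> 'a \<Rightarrow> 'c \<Rightarrow> bool \<Rightarrow> 'a" where
  "wt A B c k = (if sg (rep c) then (if k then A else B) else (if k then B else A))"

lemma sg_rep: "h \<in> H \<Longrightarrow> sg (rep (cr h)) = sg h"
proof -
  assume h: "h \<in> H"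
  have "rep (cr h) \<in> H \<and> cr (rep (cr h)) = cr h" unfolding rep_def by (rule someI_ex) (use h in blast)
  then have "rep (cr h) = h \<or> rep (cr h) = alpha h" using cr_eq h by metis
  then show ?thesis using sg_alpha h by auto
qed

definition okk :: "'d set \<Rightarrow> 'd set \<Rightarrow> bool" where
  "okk S M \<longleftrightarrow> S \<subseteq> H \<and> M \<subseteq> S \<and> (\<forall>h\<in>S. alpha h \<in> S) \<and> (\<forall>h\<in>M. alpha h \<in> M)"

definition Phi :: "'a::comm_ring_1 \<Rightarrow> 'a \<Rightarrow> 'a \<Rightarrow> 'd set \<Rightarrow> 'd set \<Rightarrow> 'a" where
  "Phi A B d S M = (\<Sum>Y\<in>{Y. cr ` M \<subseteq> Y \<and> Y \<subseteq> cr ` S}.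
      (\<Prod>c\<in>cr ` S - cr ` M. wt A B c (c \<in> Y)) * d ^ (bc V vert alpha sigma (H \<inter> cr -` Y) - 1))"

lemma cr_closed_pre: "okk S M \<Longrightarrow> H \<inter> cr -` (cr ` S) = S"
proof -
  assume i: "okk S M"
  show ?thesis
  proof
    show "H \<inter> cr -` cr ` S \<subseteq> S"
    proof
      fix x assume "x \<in> H \<inter> cr -` cr ` S"
      then obtain y where y: "y \<in> S" "cr x = cr y" "x \<in> H" by auto
      have yH: "y \<in> H" using i y(1) unfolding okk_def by blast
      have "y = x \<or> y = alpha x" using cr_eq[OF y(3) yH y(2)] .
      moreover have "\<forall>h\<in>S. alpha h \<in> S" using i unfolding okk_def by blast
      ultimately show "x \<in> S" using y alpha_inv[OF y(3)] by metis
    qed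
    show "S \<subseteq> H \<inter> cr -` cr ` S" using i unfolding okk_def by auto
  qed
qed

lemma Phi_base: "okk S S \<Longrightarrow> Phi A B d S S = d ^ (bc V vert alpha sigma S - 1)"
proof -
  assume i: "okk S S"
  have e: "{Y. cr ` S \<subseteq> Y \<and> Y \<subseteq> cr ` S} = {cr ` S}" by blast
  show ?thesis unfolding Phi_def e by (simp only: sum.insert_remove finite.emptyI empty_Diff sum.empty add_0_right Diff_cancel prod.empty cr_closed_pre[OF i] mult_1_left)
qed

lemma Phi_split:
  assumes i: "okk S M" and h: "h \<in> S" "h \<notin> M"
  shows "Phi A B d S M = wt A B (cr h) False * Phi A B d (S - {h, alpha h}) M
                        + wt A B (cr h) True * Phi A B d S (M \<union> {h, alpha h})"
proof -
  have SH: "S \<subseteq> H" and MS: "M \<subseteq> S" and Scl: "\<forall>h\<in>S. alpha h \<in> S" and Mcl: "\<forall>h\<in>M. alpha h \<in> M"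
    using i unfolding okk_def by auto
  have hH: "h \<in> H" using h SH by auto
  define c where "c = cr h"
  define f where "f Y = d ^ (bc V vert alpha sigma (H \<inter> cr -` Y) - 1)" for Y
  have cS: "c \<in> cr ` S" using h unfolding c_def by auto
  have cM: "c \<notin> cr ` M"
  proof
    assume "c \<in> cr ` M"
    then obtain m where m: "m \<in> M" "cr m = cr h" unfolding c_def by auto
    then have "h = m \<or> h = alpha m" using cr_eq hH MS SH by (metis subsetD)
    then show False using m h Mcl by auto
  qed
  have e1: "cr ` (S - {h, alpha h}) = cr ` S - {c}"
  proof
    show "cr ` (S - {h, alpha h}) \<subseteq> cr ` S - {c}"
    proof
      fix y assume "y \<in> cr ` (S - {h, alpha h})"
      then obtain x where x: "x \<in> S" "x \<noteq> h" "x \<noteq> alpha h" "y = cr x" by auto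
      then have "cr x \<noteq> cr h" using cr_eq hH SH by (metis alpha_inv subsetD)
      then show "y \<in> cr ` S - {c}" using x unfolding c_def by auto
    qed
    show "cr ` S - {c} \<subseteq> cr ` (S - {h, alpha h})"
    proof
      fix y assume "y \<in> cr ` S - {c}"
      then obtain x where x: "x \<in> S" "y = cr x" "cr x \<noteq> cr h" unfolding c_def by auto
      then have "x \<noteq> h" "x \<noteq> alpha h" using cr_alpha hH by auto
      then show "y \<in> cr ` (S - {h, alpha h})" using x by auto
    qed
  qed
  have e2: "cr ` (M \<union> {h, alpha h}) = insert c (cr ` M)" using cr_alpha hH unfolding c_def by auto
  define F where "F = {Y. cr ` M \<subseteq> Y \<and> Y \<subseteq> cr ` S}"
  define F0 where "F0 = {Y. cr ` M \<subseteq> Y \<and> Y \<subseteq> cr ` S - {c}}"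
  define F1 where "F1 = {Y. insert c (cr ` M) \<subseteq> Y \<and> Y \<subseteq> cr ` S}"
  have FF: "F = F0 \<union> F1" unfolding F_def F0_def F1_def using cS by blast
  have "F \<subseteq> Pow (cr ` S)" unfolding F_def by blast
  moreover have "finite (Pow (cr ` S))" using finite_subset[OF SH finH] by simp
  ultimately have fin: "finite F" using finite_subset by blast
  have finF0: "finite F0" using fin FF by auto
  have finF1: "finite F1" using fin FF by auto
  have dj: "F0 \<inter> F1 = {}" unfolding F0_def F1_def by blast
  have finS: "finite (cr ` S - cr ` M)" using finite_subset[OF SH finH] by simp
  have cin: "c \<in> cr ` S - cr ` M" using cS cM by simp
  have p0: "(\<Prod>c'\<in>cr ` S - cr ` M. wt A B c' (c' \<in> Y)) = wt A B c False * (\<Prod>c'\<in>(cr ` S - {c}) - cr ` M. wt A B c' (c' \<in> Y))"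
    if "Y \<in> F0" for Y
  proof -
    have "c \<notin> Y" using that unfolding F0_def by blast
    moreover have "(cr ` S - cr ` M) - {c} = (cr ` S - {c}) - cr ` M" by blast
    ultimately show ?thesis using prod.remove[OF finS cin, of "\<lambda>c'. wt A B c' (c' \<in> Y)"] by simp
  qed
  have p1: "(\<Prod>c'\<in>cr ` S - cr ` M. wt A B c' (c' \<in> Y)) = wt A B c True * (\<Prod>c'\<in>cr ` S - insert c (cr ` M). wt A B c' (c' \<in> Y))"
    if "Y \<in> F1" for Y
  proof -
    have "c \<in> Y" using that unfolding F1_def by blast
    moreover have "(cr ` S - cr ` M) - {c} = cr ` S - insert c (cr ` M)" by blast
    ultimately show ?thesis using prod.remove[OF finS cin, of "\<lambda>c'. wt A B c' (c' \<in> Y)"] by simp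
  qed
  have "Phi A B d S M = (\<Sum>Y\<in>F0. (\<Prod>c'\<in>cr ` S - cr ` M. wt A B c' (c' \<in> Y)) * f Y)
                       + (\<Sum>Y\<in>F1. (\<Prod>c'\<in>cr ` S - cr ` M. wt A B c' (c' \<in> Y)) * f Y)"
    unfolding Phi_def f_def F_def[symmetric] FF by (rule sum.union_disjoint[OF finF0 finF1 dj])
  also have "\<dots> = (\<Sum>Y\<in>F0. wt A B c False * ((\<Prod>c'\<in>(cr ` S - {c}) - cr ` M. wt A B c' (c' \<in> Y)) * f Y))
                 + (\<Sum>Y\<in>F1. wt A B c True * ((\<Prod>c'\<in>cr ` S - insert c (cr ` M). wt A B c' (c' \<in> Y)) * f Y))"
    using p0 p1 by (simp add: mult.assoc)
  also have "\<dots> = wt A B c False * Phi A B d (S - {h, alpha h}) M + wt A B c True * Phi A B d S (M \<union> {h, alpha h})"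
    unfolding Phi_def e1 e2 f_def F0_def F1_def by (simp add: sum_distrib_left)
  finally show ?thesis unfolding c_def .
qed

lemma okk_del: "okk S M \<Longrightarrow> h \<in> S \<Longrightarrow> h \<notin> M \<Longrightarrow> okk (S - {h, alpha h}) M"
proof -
  assume i: "okk S M" and h: "h \<in> S" "h \<notin> M"
  have SH: "S \<subseteq> H" and MS: "M \<subseteq> S" and Scl: "\<forall>h\<in>S. alpha h \<in> S" and Mcl: "\<forall>h\<in>M. alpha h \<in> M"
    using i unfolding okk_def by auto
  have hH: "h \<in> H" using h SH by auto
  have "alpha h \<notin> M"
  proof
    assume "alpha h \<in> M" then have "alpha (alpha h) \<in> M" using Mcl by blast
    then show False using alpha_inv[OF hH] h by simp
  qed
  then have M': "M \<subseteq> S - {h, alpha h}" using MS h by auto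
  have cl: "alpha x \<in> S - {h, alpha h}" if x: "x \<in> S - {h, alpha h}" for x
  proof -
    have xH: "x \<in> H" using x SH by auto
    have "alpha x \<noteq> h" using x alpha_inv[OF xH] by auto
    moreover have "alpha x \<noteq> alpha h"
    proof
      assume "alpha x = alpha h"
      then have "alpha (alpha x) = alpha (alpha h)" by simp
      then have "x = h" using alpha_inv[OF xH] alpha_inv[OF hH] by simp
      then show False using x by simp
    qed
    ultimately show ?thesis using x Scl by auto
  qed
  show ?thesis unfolding okk_def using SH M' cl Mcl by auto
qed

lemma okk_mark: "okk S M \<Longrightarrow> h \<in> S \<Longrightarrow> okk S (M \<union> {h, alpha h})"
  unfolding okk_def using alpha_inv by auto

lemma wt_cr: "h \<in> H \<Longrightarrow> wt A B (cr h) k = (if sg h then (if k then A else B) else (if k then B else A))"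
  unfolding wt_def using sg_rep by simp

lemma F_exists:
  "okk S M \<Longrightarrow> F_rel V vert alpha sigma sg A B d S M (Phi A B d S M)"
proof (induction "card (S - M)" arbitrary: S M rule: less_induct)
  case less
  have SH: "S \<subseteq> H" and MS: "M \<subseteq> S" using less.prems unfolding okk_def by auto
  have finS: "finite S" using finite_subset[OF SH finH] .
  show ?case
  proof (cases "S = M")
    case True
    then show ?thesis using Phi_base less.prems F_rel.all_marked by metis
  next
    case False
    then obtain h where h: "h \<in> S" "h \<notin> M" using MS by blast
    have hH: "h \<in> H" using h SH by auto
    have c1: "card ((S - {h, alpha h}) - M) < card (S - M)"
      by (rule psubset_card_mono) (use finS h in auto)
    have c2: "card (S - (M \<union> {h, alpha h})) < card (S - M)"
      by (rule psubset_card_mono) (use finS h in auto)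
    have r1: "F_rel V vert alpha sigma sg A B d (S - {h, alpha h}) M (Phi A B d (S - {h, alpha h}) M)"
      using less.hyps[OF c1 okk_del[OF less.prems h]] .
    have r2: "F_rel V vert alpha sigma sg A B d S (M \<union> {h, alpha h}) (Phi A B d S (M \<union> {h, alpha h}))"
      using less.hyps[OF c2 okk_mark[OF less.prems h(1)]] .
    have sp: "Phi A B d S M = wt A B (cr h) False * Phi A B d (S - {h, alpha h}) M
                        + wt A B (cr h) True * Phi A B d S (M \<union> {h, alpha h})"
      using Phi_split[OF less.prems h] .
    show ?thesis
    proof (cases "sg h")
      case True
      have w: "wt A B (cr h) False = B" "wt A B (cr h) True = A" using wt_cr[OF hH, of A B] True by auto
      show ?thesis unfolding sp w by (rule F_rel.pos[OF h True r1 r2])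
    next
      case False
      have w: "wt A B (cr h) False = A" "wt A B (cr h) True = B" using wt_cr[OF hH, of A B] False by auto
      show ?thesis unfolding sp w by (rule F_rel.neg[OF h False r1 r2])
    qed
  qed
qed

lemma F_unique:
  "F_rel V vert alpha sigma sg A B d S M v \<Longrightarrow> okk S M \<Longrightarrow> v = Phi A B d S M"
proof (induction rule: F_rel.induct)
  case (all_marked M S)
  then have "okk S S" "M = S" by simp_all
  then show ?case using Phi_base by metis
next
  case (pos h S M v1 v2)
  have hH: "h \<in> H" using pos.prems pos.hyps(1) unfolding okk_def by auto
  have "v1 = Phi A B d (S - {h, alpha h}) M" using pos.IH(1) okk_del[OF pos.prems pos.hyps(1,2)] .
  moreover have "v2 = Phi A B d S (M \<union> {h, alpha h})" using pos.IH(2) okk_mark[OF pos.prems pos.hyps(1)] .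
  ultimately show ?case using Phi_split[OF pos.prems pos.hyps(1,2), of A B d] wt_cr[OF hH, of A B] pos.hyps(3) by simp
next
  case (neg h S M v1 v2)
  have hH: "h \<in> H" using neg.prems neg.hyps(1) unfolding okk_def by auto
  have "v1 = Phi A B d (S - {h, alpha h}) M" using neg.IH(1) okk_del[OF neg.prems neg.hyps(1,2)] .
  moreover have "v2 = Phi A B d S (M \<union> {h, alpha h})" using neg.IH(2) okk_mark[OF neg.prems neg.hyps(1)] .
  ultimately show ?case using Phi_split[OF neg.prems neg.hyps(1,2), of A B d] wt_cr[OF hH, of A B] neg.hyps(3) by simp
qed

end



context medial begin

lemma crH: "cr ` H = X"
proof
  show "cr ` H \<subseteq> X" using cr_in by auto
  show "X \<subseteq> cr ` H"
  proof
    fix c assume c: "c \<in> X"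
    then have "(c, 0) \<in> vends X" unfolding vends_def by simp
    then obtain p where p: "p \<in> H \<times> UNIV" "mu p = (c, 0)"
      using mu_bij bij_betw_imp_surj_on by (metis imageE)
    obtain h b where hb: "p = (h, b)" by (cases p)
    have "cr h = c" using crb[of h b] p hb by auto
    then show "c \<in> cr ` H" using p hb by auto
  qed
qed

lemma okk_top: "okk H {}" unfolding okk_def using alpha_in by auto

definition rho :: "'c set \<Rightarrow> 'c set" where "rho s = {c \<in> X. (c \<in> s) = sg (rep c)}"

lemma Phi_bracket: "Phi A B d H {} = bracket X arc loops A B d"
proof -
  have finX: "finite X" using vld unfolding virtual_link_diagram_def by simp
  have F: "{Y. cr ` {} \<subseteq> Y \<and> Y \<subseteq> cr ` H} = Pow X" using crH by auto
  have key: "(\<Prod>c\<in>X. wt A B c (c \<in> rho s)) * d ^ (bc V vert alpha sigma (H \<inter> cr -` rho s) - 1)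
               = A ^ card s * B ^ card (X - s) * d ^ (num_curves X arc loops s - 1)" if s: "s \<in> Pow X" for s
  proof -
    have "(\<Prod>c\<in>X. wt A B c (c \<in> rho s)) = (\<Prod>c\<in>X. if c \<in> s then A else B)"
      by (rule prod.cong) (auto simp: wt_def rho_def)
    also have "\<dots> = (\<Prod>c\<in>X \<inter> {c. c \<in> s}. A) * (\<Prod>c\<in>X \<inter> - {c. c \<in> s}. B)"
      by (rule prod.If_cases[OF finX])
    also have "\<dots> = A ^ card s * B ^ card (X - s)"
    proof -
      have "X \<inter> {c. c \<in> s} = s" "X \<inter> - {c. c \<in> s} = X - s" using s by auto
      then show ?thesis by simp
    qed
    finally have p: "(\<Prod>c\<in>X. wt A B c (c \<in> rho s)) = A ^ card s * B ^ card (X - s)" .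
    have T: "H \<inter> cr -` rho s = Tset s"
      unfolding rho_def Tset_def using cr_in sg_rep by auto
    have "bc V vert alpha sigma (H \<inter> cr -` rho s) = num_curves X arc loops s"
      unfolding T num_curves_def using curves[of s] by simp
    then show ?thesis using p by simp
  qed
  have rr: "rho (rho s) = s" if "s \<in> Pow X" for s using that unfolding rho_def by auto
  have rP: "rho s \<in> Pow X" for s unfolding rho_def by auto
  have "Phi A B d H {} = (\<Sum>Y\<in>Pow X. (\<Prod>c\<in>X. wt A B c (c \<in> Y)) * d ^ (bc V vert alpha sigma (H \<inter> cr -` Y) - 1))"
    unfolding Phi_def F using crH by simp
  also have "\<dots> = (\<Sum>s\<in>Pow X. A ^ card s * B ^ card (X - s) * d ^ (num_curves X arc loops s - 1))"
  proof (rule sum.reindex_bij_witness[of _ rho rho])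
    fix s assume s: "s \<in> Pow X"
    show "rho (rho s) = s" using rr[OF s] .
    show "rho s \<in> Pow X" using rP .
    show "rho (rho s) = s" using rr[OF s] .
    show "rho s \<in> Pow X" using rP .
    show "A ^ card (rho s) * B ^ card (X - rho s) * d ^ (num_curves X arc loops (rho s) - 1)
        = (\<Prod>c\<in>X. wt A B c (c \<in> s)) * d ^ (bc V vert alpha sigma (H \<inter> cr -` s) - 1)"
      using key[OF rP[of s]] rr[OF s] by simp
  qed
  also have "\<dots> = bracket X arc loops A B d" unfolding bracket_def ..
  finally show ?thesis .
qed

end

theorem proposition4p3:
  fixes V :: "'v set" and H :: "'d set" and vert :: "'d \<Rightarrow> 'v"
    and alpha sigma :: "'d \<Rightarrow> 'd" and sg :: "'d \<Rightarrow> bool"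
    and X :: "'c set" and arc :: "'c \<times> nat \<Rightarrow> 'c \<times> nat" and loops :: nat
    and A B d :: "'a::comm_ring_1"
  assumes "signed_cyclic_graph V H vert alpha sigma sg"
    and "medial_associated V H vert alpha sigma sg X arc loops"
  shows "F_rel V vert alpha sigma sg A B d H {} (bracket X arc loops A B d)
         \<and> (\<forall>v. F_rel V vert alpha sigma sg A B d H {} v \<longrightarrow> v = bracket X arc loops A B d)"
proof -
  obtain mu where "medial V H vert alpha sigma sg X arc loops mu"
    using assms unfolding medial_associated_def medial_def by blast
  then interpret m: medial V H vert alpha sigma sg X arc loops mu .
  have e: "m.Phi A B d H {} = bracket X arc loops A B d" by (rule m.Phi_bracket)
  have 1: "F_rel V vert alpha sigma sg A B d H {} (bracket X arc loops A B d)"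
    using m.F_exists[OF m.okk_top, of A B d] unfolding e .
  have 2: "\<forall>v. F_rel V vert alpha sigma sg A B d H {} v \<longrightarrow> v = bracket X arc loops A B d"
    using m.F_unique m.okk_top e by metis
  show ?thesis using 1 2 by blast
qed


end
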